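(* Under the RS-GBM model with two regimes $E=\{1,2\}$ and two futures with maturities $T_1<T_2$, assume $\tilde q_{12},\tilde q_{21}\ge 0$. Then for each $i\in\{1,2\}$ and $x\in\mathbb R$, the $2\times 2$ coefficient matrix $$\boldsymbol\Gamma(t,x,i)=e^x\begin{pmatrix}\sigma_ig^{(1)}_i(t)&\sigma_ig^{(2)}_i(t)\\ g^{(1)}_j(t)-g^{(1)}_i(t)& g^{(2)}_j(t)-g^{(2)}_i(t)\end{pmatrix},\quad j\ne i,$$ which has determinant $e^{2x}\sigma_i\big(g^{(1)}_i(t)g^{(2)}_j(t)-g^{(1)}_j(t)g^{(2)}_i(t)\big)$, is invertible for all $t\in[0,T_1]$ if and only if $\mu_1+\frac{\sigma_1^2}{2}\neq\mu_2+\frac{\sigma_2^2}{2}$. If instead $\mu_1+\frac{\sigma_1^2}{2}=\mu_2+\frac{\sigma_2^2}{2}$, then $g^{(m)}_1=g^{(m)}_2$ for each $m$, i.e. the futures prices coincide in both regimes.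
   Context: RS-GBM model: $\xi$ is a two-state Markov chain with generator $\tilde{\mathbf Q}$ under $\mathbb Q$; $dX_t=\mu(\xi_t)dt+\sigma(\xi_t)dZ^{\mathbb Q}_t$ with $Z^{\mathbb Q}$ a $\mathbb Q$-Brownian motion independent of $\xi$, $\mu_k=\mu(k)$, $\sigma_k=\sigma(k)>0$. For maturity $T_m$, $g^{(m)}_k(t)=\mathbb E^{\mathbb Q}[\exp(\int_t^{T_m}(\mu(\xi_s)+\sigma^2(\xi_s)/2)ds)\mid\xi_t=k]$, so that the futures price is $F^{(m)}_k(t,x)=e^xg^{(m)}_k(t)$. *)

theory Defs
  imports "HOL-Analysis.Analysis"
begin

fun mpow :: "real^'n^'n \<Rightarrow> nat \<Rightarrow> real^'n^'n" where
  "mpow A 0 = mat 1"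
| "mpow A (Suc n) = A ** mpow A n"

definition gen2 :: "real \<Rightarrow> real \<Rightarrow> real^2^2" where
  "gen2 q12 q21 = (\<chi> k l. if k = 1 then (if l = 1 then - q12 else q12)
                              else (if l = 1 then q21 else - q21))"

definition fkmat :: "real \<Rightarrow> real \<Rightarrow> (2 \<Rightarrow> real) \<Rightarrow> (2 \<Rightarrow> real) \<Rightarrow> real^2^2" where
  "fkmat q12 q21 mu sig =
     gen2 q12 q21 + (\<chi> k l. if k = l then mu k + (sig k)^2 / 2 else 0)"

text \<open>g^{(m)}_k(t) = E[exp(int_t^{Tm} (mu + sigma^2/2)(xi_s) ds) | xi_t = k],
  given by the Feynman-Kac formula for finite-state Markov chains as the
  k-th entry of exp((Tm - t)(Q + diag(mu + sigma^2/2))) applied to the ones vector.\<close>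
definition gfun :: "real \<Rightarrow> real \<Rightarrow> (2 \<Rightarrow> real) \<Rightarrow> (2 \<Rightarrow> real) \<Rightarrow> real \<Rightarrow> 2 \<Rightarrow> real \<Rightarrow> real" where
  "gfun q12 q21 mu sig Tm k t =
     (\<Sum>n. (Tm - t)^n / fact n * ((mpow (fkmat q12 q21 mu sig) n *v (\<chi> l. 1)) $ k))"

definition other :: "2 \<Rightarrow> 2" where
  "other i = (if i = 1 then 2 else 1)"

definition Gamma :: "real \<Rightarrow> real \<Rightarrow> (2 \<Rightarrow> real) \<Rightarrow> (2 \<Rightarrow> real) \<Rightarrow> real \<Rightarrow> real
                     \<Rightarrow> real \<Rightarrow> real \<Rightarrow> 2 \<Rightarrow> real^2^2" where
  "Gamma q12 q21 mu sig T1 T2 t x i =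
     (let g = (\<lambda>Tm k. gfun q12 q21 mu sig Tm k t); j = other i in
      exp x *\<^sub>R (\<chi> r c. if r = 1
                        then sig i * g (if c = 1 then T1 else T2) i
                        else g (if c = 1 then T1 else T2) j - g (if c = 1 then T1 else T2) i))"

end

theory Submission imports Defs begin

lemma expser: "(\<lambda>n. x^n / fact n) sums exp (x::real)"
  using exp_converges[of x] by (simp add: divide_inverse_commute)

lemma uvec:
  fixes q12 q21 :: real and mu sig :: "2 \<Rightarrow> real" and a b :: "nat \<Rightarrow> real"
  defines "A \<equiv> \<lambda>k. mu k + (sig k)^2/2"
  defines "tr \<equiv> A 1 - q12 + A 2 - q21"
  defines "dd \<equiv> (A 1 - q12) * (A 2 - q21) - q12 * q21"
  assumes a0: "a 0 = 1" and b0: "b 0 = 0"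
    and aS: "\<And>n. a (Suc n) = - dd * b n" and bS: "\<And>n. b (Suc n) = a n + tr * b n"
  shows "(mpow (fkmat q12 q21 mu sig) n *v (\<chi> l. 1)) $ k = a n + b n * A k"
proof (induction n arbitrary: k)
  case 0
  then show ?case by (simp add: a0 b0 matrix_vector_mul_lid)
next
  case (Suc n)
  have "(mpow (fkmat q12 q21 mu sig) (Suc n) *v (\<chi> l. 1)) $ k
     = (fkmat q12 q21 mu sig *v (mpow (fkmat q12 q21 mu sig) n *v (\<chi> l. 1))) $ k"
    by (simp add: matrix_vector_mul_assoc)
  also have "\<dots> = (\<Sum>l\<in>UNIV. (fkmat q12 q21 mu sig)$k$l * (a n + b n * A l))"
    using Suc.IH by (simp add: matrix_vector_mult_def)
  also have "\<dots> = a (Suc n) + b (Suc n) * A k"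
  proof -
    have e: "fkmat q12 q21 mu sig $1$1 = A 1 - q12" "fkmat q12 q21 mu sig $1$2 = q12"
      "fkmat q12 q21 mu sig $2$1 = q21" "fkmat q12 q21 mu sig $2$2 = A 2 - q21"
      by (simp_all add: fkmat_def gen2_def A_def)
    show ?thesis
      using exhaust_2[of k]
      by (auto simp: sum_2 e aS bS tr_def dd_def algebra_simps)
  qed
  finally show ?case .
qed

lemma gfun_form:
  fixes q12 q21 :: real and mu sig :: "2 \<Rightarrow> real" and a b :: "nat \<Rightarrow> real"
  defines "A \<equiv> \<lambda>k. mu k + (sig k)^2/2"
  defines "tr \<equiv> A 1 - q12 + A 2 - q21"
  defines "dd \<equiv> (A 1 - q12) * (A 2 - q21) - q12 * q21"
  assumes a0: "a 0 = 1" and b0: "b 0 = 0"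
    and aS: "\<And>n. a (Suc n) = - dd * b n" and bS: "\<And>n. b (Suc n) = a n + tr * b n"
    and sa: "\<And>s. (\<lambda>n. s^n/fact n * a n) sums \<alpha> s"
    and sb: "\<And>s. (\<lambda>n. s^n/fact n * b n) sums \<beta> s"
  shows "gfun q12 q21 mu sig Tm k t = \<alpha> (Tm-t) + \<beta> (Tm-t) * A k"
proof -
  have u: "\<And>n. (mpow (fkmat q12 q21 mu sig) n *v (\<chi> l. 1)) $ k = a n + b n * A k"
    using uvec[where a=a and b=b, OF a0 b0] aS bS unfolding A_def tr_def dd_def by blast
  have "(\<lambda>n. (Tm-t)^n/fact n * a n + (Tm-t)^n/fact n * b n * A k) sums (\<alpha> (Tm-t) + \<beta> (Tm-t) * A k)"
    by (intro sums_add sums_mult2 sa sb)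
  moreover have "(\<lambda>n. (Tm-t)^n/fact n * a n + (Tm-t)^n/fact n * b n * A k) = (\<lambda>n. (Tm-t)^n/fact n * ((mpow (fkmat q12 q21 mu sig) n *v (\<chi> l. 1)) $ k))"
    by (simp add: u fun_eq_iff algebra_simps add_divide_distrib)
  ultimately have "(\<lambda>n. (Tm-t)^n/fact n * ((mpow (fkmat q12 q21 mu sig) n *v (\<chi> l. 1)) $ k)) sums (\<alpha> (Tm-t) + \<beta> (Tm-t) * A k)"
    by simp
  then show ?thesis unfolding gfun_def by (rule sums_unique[symmetric])
qed

lemma alg:
  fixes l1 l2 p q r w :: real
  assumes "l1 - l2 \<noteq> 0"
  shows "((l1*q - l2*p)/(l1-l2))*((r - w)/(l1-l2)) - ((l1*w - l2*r)/(l1-l2))*((p-q)/(l1-l2)) = (q*r - p*w)/(l1-l2)"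
proof -
  have "((l1*q - l2*p)/(l1-l2))*((r - w)/(l1-l2)) - ((l1*w - l2*r)/(l1-l2))*((p-q)/(l1-l2))
     = ((l1*q - l2*p)*(r - w) - (l1*w - l2*r)*(p-q)) / ((l1-l2)*(l1-l2))"
    by (simp only: times_divide_times_eq diff_divide_distrib[symmetric])
  also have "(l1*q - l2*p)*(r - w) - (l1*w - l2*r)*(p-q) = (l1-l2)*(q*r - p*w)"
    by (simp add: algebra_simps)
  finally show ?thesis using assms by simp
qed

lemma W_distinct:
  fixes l1 l2 ua ub :: real
  assumes "l2 < l1" "ua < ub"
  shows "((l1 * exp (l2*ua) - l2 * exp (l1*ua))/(l1-l2)) * ((exp (l1*ub) - exp (l2*ub))/(l1-l2))
       - ((l1 * exp (l2*ub) - l2 * exp (l1*ub))/(l1-l2)) * ((exp (l1*ua) - exp (l2*ua))/(l1-l2)) > 0"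
proof -
  have eq: "((l1 * exp (l2*ua) - l2 * exp (l1*ua))/(l1-l2)) * ((exp (l1*ub) - exp (l2*ub))/(l1-l2))
       - ((l1 * exp (l2*ub) - l2 * exp (l1*ub))/(l1-l2)) * ((exp (l1*ua) - exp (l2*ua))/(l1-l2))
       = (exp (l2*ua) * exp (l1*ub) - exp (l1*ua) * exp (l2*ub)) / (l1 - l2)"
    using assms by (intro alg) simp
  have "l1*ua + l2*ub < l2*ua + l1*ub"
  proof -
    have "0 < (l1 - l2) * (ub - ua)" using assms by simp
    then show ?thesis by (simp add: algebra_simps)
  qed
  then have "exp (l1*ua) * exp (l2*ub) < exp (l2*ua) * exp (l1*ub)"
    by (simp add: exp_add[symmetric])
  then show ?thesis unfolding eq using assms by simp
qed

lemma W_equal: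
  fixes l ua ub :: real
  assumes "ua < ub"
  shows "(exp (l*ua) - l * (ua * exp (l*ua))) * (ub * exp (l*ub))
       - (exp (l*ub) - l * (ub * exp (l*ub))) * (ua * exp (l*ua)) > 0"
proof -
  have "(exp (l*ua) - l * (ua * exp (l*ua))) * (ub * exp (l*ub))
       - (exp (l*ub) - l * (ub * exp (l*ub))) * (ua * exp (l*ua)) = exp (l*ua) * exp (l*ub) * (ub - ua)"
    by (simp add: algebra_simps)
  then show ?thesis using assms by simp
qed

lemma ab_exists:
  fixes q12 q21 :: real and mu sig :: "2 \<Rightarrow> real"
  defines "A \<equiv> \<lambda>k. mu k + (sig k)^2/2"
  assumes q: "q12 \<ge> 0" "q21 \<ge> 0"
  shows "\<exists>\<alpha> \<beta>. (\<forall>Tm k t. gfun q12 q21 mu sig Tm k t = \<alpha> (Tm - t) + \<beta> (Tm - t) * A k)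
           \<and> (\<forall>u v. u < v \<longrightarrow> \<alpha> u * \<beta> v - \<alpha> v * \<beta> u > 0)"
proof -
  define tr where "tr = A 1 - q12 + A 2 - q21"
  define dd where "dd = (A 1 - q12) * (A 2 - q21) - q12 * q21"
  define D where "D = (A 1 - q12 - (A 2 - q21))^2 + 4 * q12 * q21"
  define r where "r = sqrt D"
  define l1 where "l1 = (tr + r) / 2"
  define l2 where "l2 = (tr - r) / 2"
  have D0: "D \<ge> 0" unfolding D_def using q by (intro add_nonneg_nonneg) simp_all
  have rr: "r * r = D" unfolding r_def using D0 by simp
  have r0: "r \<ge> 0" unfolding r_def using D0 by simp
  have sum12: "l1 + l2 = tr" unfolding l1_def l2_def by (simp add: field_simps)
  have prod12: "l1 * l2 = dd"
  proof -
    have "l1 * l2 = (tr * tr - r * r) / 4" unfolding l1_def l2_def by (simp add: field_simps)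
    also have "\<dots> = dd" unfolding rr unfolding D_def tr_def dd_def by (simp add: power2_eq_square field_simps)
    finally show ?thesis .
  qed
  have GF: "gfun q12 q21 mu sig Tm k t = \<alpha> (Tm-t) + \<beta> (Tm-t) * A k"
    if "a 0 = 1" "b 0 = 0" "\<And>n. a (Suc n) = - dd * b n"
     "\<And>n. b (Suc n) = a n + tr * b n"
     "\<And>s. (\<lambda>n. s^n/fact n * a n) sums \<alpha> s"
     "\<And>s. (\<lambda>n. s^n/fact n * b n) sums \<beta> s" for a b \<alpha> \<beta> Tm k t
    using that unfolding A_def tr_def dd_def by (rule gfun_form[where a=a and b=b and \<alpha>=\<alpha> and \<beta>=\<beta>])
  show ?thesis
  proof (cases "r > 0")
    case True
    then have lt: "l2 < l1" unfolding l1_def l2_def by simp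
    then have dn: "l1 - l2 \<noteq> 0" by simp
    define a where "a n = (l1*l2^n - l2*l1^n)/(l1-l2)" for n
    define b where "b n = (l1^n - l2^n)/(l1-l2)" for n
    define \<alpha> where "\<alpha> s = (l1 * exp (l2* s) - l2 * exp (l1* s))/(l1-l2)" for s
    define \<beta> where "\<beta> s = (exp (l1* s) - exp (l2* s))/(l1-l2)" for s
    have a0: "a 0 = 1" unfolding a_def using dn by simp
    have b0: "b 0 = 0" unfolding b_def by simp
    have aS: "a (Suc n) = - dd * b n" for n
      unfolding a_def b_def prod12[symmetric] using dn by (simp add: field_simps)
    have bS: "b (Suc n) = a n + tr * b n" for n
    proof -
      have h: "l1^Suc n - l2^Suc n = (l1*l2^n - l2*l1^n) + (l1+l2)*(l1^n - l2^n)"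
        by (simp add: algebra_simps)
      show ?thesis unfolding a_def b_def sum12[symmetric] h by (simp add: add_divide_distrib)
    qed
    have sa: "(\<lambda>n. s^n/fact n * a n) sums \<alpha> s" for s
    proof -
      have "(\<lambda>n. (l1 * ((l2* s)^n/fact n) - l2 * ((l1* s)^n/fact n))/(l1-l2)) sums \<alpha> s"
        unfolding \<alpha>_def by (intro sums_divide sums_diff sums_mult expser)
      moreover have "(\<lambda>n. (l1 * ((l2* s)^n/fact n) - l2 * ((l1* s)^n/fact n))/(l1-l2)) = (\<lambda>n. s^n/fact n * a n)"
        unfolding a_def by (simp add: fun_eq_iff power_mult_distrib field_simps)
      ultimately show ?thesis by simp
    qed
    have sb: "(\<lambda>n. s^n/fact n * b n) sums \<beta> s" for s
    proof -
      have "(\<lambda>n. ((l1* s)^n/fact n - (l2* s)^n/fact n)/(l1-l2)) sums \<beta> s"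
        unfolding \<beta>_def by (intro sums_divide sums_diff expser)
      moreover have "(\<lambda>n. ((l1* s)^n/fact n - (l2* s)^n/fact n)/(l1-l2)) = (\<lambda>n. s^n/fact n * b n)"
        unfolding b_def by (simp add: fun_eq_iff power_mult_distrib field_simps)
      ultimately show ?thesis by simp
    qed
    show ?thesis
    proof (intro exI conjI allI impI)
      show "gfun q12 q21 mu sig Tm k t = \<alpha> (Tm - t) + \<beta> (Tm - t) * A k" for Tm k t
        by (rule GF[OF a0 b0 aS bS sa sb])
      show "\<alpha> u * \<beta> v - \<alpha> v * \<beta> u > 0" if "u < v" for u v
        unfolding \<alpha>_def \<beta>_def using W_distinct[OF lt that] .
    qed
  next
    case False
    then have "r = 0" using r0 by simp
    then have eq: "l1 = l2" unfolding l1_def l2_def by simp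
    define l where "l = l1"
    have tr2: "tr = 2 * l" using sum12 eq l_def by simp
    have dd2: "dd = l * l" using prod12 eq l_def by simp
    define b where "b n = real n * l^(n-1)" for n
    define a where "a n = l^n - l * b n" for n
    define \<alpha> where "\<alpha> s = exp (l* s) - l * (s * exp (l* s))" for s
    define \<beta> where "\<beta> s = s * exp (l* s)" for s
    have a0: "a 0 = 1" unfolding a_def b_def by simp
    have b0: "b 0 = 0" unfolding b_def by simp
    have aS: "a (Suc n) = - dd * b n" for n
      unfolding a_def b_def dd2 by (cases n) (simp_all add: algebra_simps)
    have bS: "b (Suc n) = a n + tr * b n" for n
      unfolding a_def b_def tr2 by (cases n) (simp_all add: algebra_simps)
    have sb: "(\<lambda>n. s^n/fact n * b n) sums \<beta> s" for s
    proof -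
      have "(\<lambda>n. s * ((l* s)^n/fact n)) sums \<beta> s"
        unfolding \<beta>_def by (intro sums_mult expser)
      moreover have "(\<lambda>n. s * ((l* s)^n/fact n)) = (\<lambda>n. s^(Suc n)/fact (Suc n) * b (Suc n))"
      proof (rule ext)
        fix n
        have f: "fact (Suc n) = real (Suc n) * fact n" by simp
        have "s^(Suc n)/fact (Suc n) * b (Suc n) = (real (Suc n) / real (Suc n)) * (s * ((l* s)^n/fact n))"
          unfolding b_def f by (simp add: power_mult_distrib)
        then show "s * ((l* s)^n/fact n) = s^(Suc n)/fact (Suc n) * b (Suc n)" by simp
      qed
      ultimately have "(\<lambda>n. s^(Suc n)/fact (Suc n) * b (Suc n)) sums \<beta> s" by simp
      then show ?thesis using sums_Suc_iff[of "\<lambda>n. s^n/fact n * b n"] b0 by simp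
    qed
    have sa: "(\<lambda>n. s^n/fact n * a n) sums \<alpha> s" for s
    proof -
      have "(\<lambda>n. (l* s)^n/fact n - l * (s^n/fact n * b n)) sums \<alpha> s"
        unfolding \<alpha>_def \<beta>_def[symmetric] by (intro sums_diff sums_mult expser sb)
      moreover have "(\<lambda>n. (l* s)^n/fact n - l * (s^n/fact n * b n)) = (\<lambda>n. s^n/fact n * a n)"
        unfolding a_def by (simp add: fun_eq_iff power_mult_distrib field_simps)
      ultimately show ?thesis by simp
    qed
    show ?thesis
    proof (intro exI conjI allI impI)
      show "gfun q12 q21 mu sig Tm k t = \<alpha> (Tm - t) + \<beta> (Tm - t) * A k" for Tm k t
        by (rule GF[OF a0 b0 aS bS sa sb])
      show "\<alpha> u * \<beta> v - \<alpha> v * \<beta> u > 0" if "u < v" for u v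
        unfolding \<alpha>_def \<beta>_def using W_equal[OF that] .
    qed
  qed
qed

theorem mainTheorem7:
  fixes q12 q21 T1 T2 :: real and mu sig :: "2 \<Rightarrow> real"
  assumes "q12 \<ge> 0" and "q21 \<ge> 0"
    and "\<And>k. sig k > 0"
    and "0 < T1" and "T1 < T2"
  shows "(\<forall>i::2. \<forall>x::real.
            (\<forall>t\<in>{0..T1}. invertible (Gamma q12 q21 mu sig T1 T2 t x i))
            \<longleftrightarrow> mu 1 + (sig 1)^2 / 2 \<noteq> mu 2 + (sig 2)^2 / 2)
       \<and> (mu 1 + (sig 1)^2 / 2 = mu 2 + (sig 2)^2 / 2 \<longrightarrow>
            (\<forall>Tm\<in>{T1, T2}. \<forall>t\<in>{0..Tm}.
               gfun q12 q21 mu sig Tm 1 t = gfun q12 q21 mu sig Tm 2 t))"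
proof -
  define A where "A = (\<lambda>k. mu k + (sig k)^2/2)"
  obtain \<alpha> \<beta> where G: "\<And>Tm k t. gfun q12 q21 mu sig Tm k t = \<alpha> (Tm - t) + \<beta> (Tm - t) * A k"
    and W: "\<And>u v. u < v \<Longrightarrow> \<alpha> u * \<beta> v - \<alpha> v * \<beta> u > 0"
    using ab_exists[OF assms(1,2), of mu sig] unfolding A_def by blast
  have n12: "(1::2) \<noteq> 2" by simp
  have det: "det (Gamma q12 q21 mu sig T1 T2 t x i) = (exp x)^2 * sig i
      * (\<alpha> (T1-t) * \<beta> (T2-t) - \<alpha> (T2-t) * \<beta> (T1-t)) * (A (other i) - A i)" for t x i
    unfolding det_2 Gamma_def Let_def using n12 by (simp add: G power2_eq_square algebra_simps)
  have Aeq: "A (other i) - A i = 0 \<longleftrightarrow> A 1 = A 2" for i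
    using exhaust_2[of i] by (auto simp: other_def)
  have P1: "(\<forall>t\<in>{0..T1}. invertible (Gamma q12 q21 mu sig T1 T2 t x i)) \<longleftrightarrow> A 1 \<noteq> A 2" for i x
  proof
    assume h: "\<forall>t\<in>{0..T1}. invertible (Gamma q12 q21 mu sig T1 T2 t x i)"
    show "A 1 \<noteq> A 2"
    proof
      assume "A 1 = A 2"
      then have "det (Gamma q12 q21 mu sig T1 T2 0 x i) = 0" unfolding det using Aeq by simp
      moreover have "invertible (Gamma q12 q21 mu sig T1 T2 0 x i)" using h assms(4) by simp
      ultimately show False by (simp add: invertible_det_nz)
    qed
  next
    assume h: "A 1 \<noteq> A 2"
    show "\<forall>t\<in>{0..T1}. invertible (Gamma q12 q21 mu sig T1 T2 t x i)"
    proof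
      fix t assume "t \<in> {0..T1}"
      have w: "\<alpha> (T1-t) * \<beta> (T2-t) - \<alpha> (T2-t) * \<beta> (T1-t) \<noteq> 0"
        using W[of "T1-t" "T2-t"] assms(5) by simp
      have "A (other i) - A i \<noteq> 0" using Aeq h by simp
      then have "det (Gamma q12 q21 mu sig T1 T2 t x i) \<noteq> 0"
        unfolding det using w assms(3)[of i] by simp
      then show "invertible (Gamma q12 q21 mu sig T1 T2 t x i)" by (simp add: invertible_det_nz)
    qed
  qed
  show ?thesis
  proof
    show "\<forall>i::2. \<forall>x::real.
            (\<forall>t\<in>{0..T1}. invertible (Gamma q12 q21 mu sig T1 T2 t x i))
            \<longleftrightarrow> mu 1 + (sig 1)^2 / 2 \<noteq> mu 2 + (sig 2)^2 / 2"
      using P1 unfolding A_def by simp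
    show "mu 1 + (sig 1)^2 / 2 = mu 2 + (sig 2)^2 / 2 \<longrightarrow>
            (\<forall>Tm\<in>{T1, T2}. \<forall>t\<in>{0..Tm}.
               gfun q12 q21 mu sig Tm 1 t = gfun q12 q21 mu sig Tm 2 t)"
      by (simp add: G A_def)
  qed
qed

end
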